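(* Let $k\ge1$ be an integer and $a,b,c,d\ge0$. Let $S_1=\inf\{S(u,v):(u,v)\in H^1(\mathbb{R})\times H^1(\mathbb{R}),\ \widetilde P(u,v)=1\}$ and $\lambda_1=(S_1)^{\frac{k+1}{k}}$. Then $$\lambda_1=\frac{2k+2}{k}\,\omega_{\mathcal{N}},$$ where $\omega_{\mathcal{N}}=\inf_{(u,v)\in\mathcal{N}}I(u,v)$.
   Context: $H(u,v)=\frac{a}{2k+2}(u^{2k+2}+v^{2k+2})+\frac{b}{k+1}(uv)^{k+1}+\frac{c}{k}u^{k+2}v^k+\frac{d}{k}u^kv^{k+2}$; $S(u,v)=\int(u'^2+v'^2+u^2+v^2)dx$; $\widetilde P(u,v)=(2k+2)\int H(u,v)dx$; $I(u,v)=\frac12S(u,v)-\int H(u,v)dx$; $\mathcal{N}=\{(u,v)\in H^1\times H^1\setminus\{(0,0)\}:I'(u,v)(u,v)=0\}$. *)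

theory Defs
  imports "HOL-Analysis.Analysis"
begin

definition test_fun :: "(real \<Rightarrow> real) \<Rightarrow> bool" where
  "test_fun \<phi> \<longleftrightarrow> (\<forall>n x. (deriv ^^ n) \<phi> differentiable (at x))
                    \<and> compact (closure {x. \<phi> x \<noteq> 0})"

definition L2 :: "(real \<Rightarrow> real) \<Rightarrow> bool" where
  "L2 u \<longleftrightarrow> u \<in> borel_measurable lborel \<and> integrable lborel (\<lambda>x. (u x)^2)"

definition is_weak_deriv :: "(real \<Rightarrow> real) \<Rightarrow> (real \<Rightarrow> real) \<Rightarrow> bool" where
  "is_weak_deriv u g \<longleftrightarrow> (\<forall>\<phi>. test_fun \<phi> \<longrightarrow>
      integrable lborel (\<lambda>x. u x * deriv \<phi> x) \<and> integrable lborel (\<lambda>x. g x * \<phi> x) \<and>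
      (\<integral>x. u x * deriv \<phi> x \<partial>lborel) = - (\<integral>x. g x * \<phi> x \<partial>lborel))"

definition H1 :: "(real \<Rightarrow> real) set" where
  "H1 = {u. L2 u \<and> (\<exists>g. L2 g \<and> is_weak_deriv u g)}"

(* the (a.e. unique) weak derivative u' in L^2 *)
definition wderiv :: "(real \<Rightarrow> real) \<Rightarrow> (real \<Rightarrow> real)" where
  "wderiv u = (SOME g. L2 g \<and> is_weak_deriv u g)"

definition Hfun :: "nat \<Rightarrow> real \<Rightarrow> real \<Rightarrow> real \<Rightarrow> real \<Rightarrow> real \<Rightarrow> real \<Rightarrow> real" where
  "Hfun k a b c d u v =
     a / (2 * real k + 2) * (u^(2*k+2) + v^(2*k+2)) + b / (real k + 1) * (u * v)^(k+1)
     + c / real k * u^(k+2) * v^k + d / real k * u^k * v^(k+2)"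

definition Sfun :: "(real \<Rightarrow> real) \<Rightarrow> (real \<Rightarrow> real) \<Rightarrow> real" where
  "Sfun u v = (\<integral>x. (wderiv u x)^2 + (wderiv v x)^2 + (u x)^2 + (v x)^2 \<partial>lborel)"

definition Ptilde :: "nat \<Rightarrow> real \<Rightarrow> real \<Rightarrow> real \<Rightarrow> real \<Rightarrow> (real \<Rightarrow> real) \<Rightarrow> (real \<Rightarrow> real) \<Rightarrow> real" where
  "Ptilde k a b c d u v = (2 * real k + 2) * (\<integral>x. Hfun k a b c d (u x) (v x) \<partial>lborel)"

definition Ifun :: "nat \<Rightarrow> real \<Rightarrow> real \<Rightarrow> real \<Rightarrow> real \<Rightarrow> (real \<Rightarrow> real) \<Rightarrow> (real \<Rightarrow> real) \<Rightarrow> real" where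
  "Ifun k a b c d u v = Sfun u v / 2 - (\<integral>x. Hfun k a b c d (u x) (v x) \<partial>lborel)"

(* Nehari manifold: (u,v) \<in> H^1 \<times> H^1, (u,v) \<noteq> (0,0) in H^1 (i.e. not a.e. zero),
   and I'(u,v)(u,v) = 0, the derivative of I at (u,v) in direction (u,v) *)
definition Nehari :: "nat \<Rightarrow> real \<Rightarrow> real \<Rightarrow> real \<Rightarrow> real \<Rightarrow> ((real \<Rightarrow> real) \<times> (real \<Rightarrow> real)) set" where
  "Nehari k a b c d = {(u, v). u \<in> H1 \<and> v \<in> H1 \<and>
      \<not> (AE x in lborel. u x = 0 \<and> v x = 0) \<and>
      ((\<lambda>t. Ifun k a b c d (\<lambda>x. u x + t * u x) (\<lambda>x. v x + t * v x)) has_real_derivative 0) (at 0)}"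

definition ereal_powr :: "ereal \<Rightarrow> real \<Rightarrow> ereal" where
  "ereal_powr x p = (if x = \<infinity> then \<infinity> else ereal (real_of_ereal x powr p))"

definition S1 :: "nat \<Rightarrow> real \<Rightarrow> real \<Rightarrow> real \<Rightarrow> real \<Rightarrow> ereal" where
  "S1 k a b c d = (INF p \<in> {(u, v). u \<in> H1 \<and> v \<in> H1 \<and> Ptilde k a b c d u v = 1}.
                     ereal (Sfun (fst p) (snd p)))"

definition lambda1 :: "nat \<Rightarrow> real \<Rightarrow> real \<Rightarrow> real \<Rightarrow> real \<Rightarrow> ereal" where
  "lambda1 k a b c d = ereal_powr (S1 k a b c d) ((real k + 1) / real k)"

definition omegaN :: "nat \<Rightarrow> real \<Rightarrow> real \<Rightarrow> real \<Rightarrow> real \<Rightarrow> ereal" where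
  "omegaN k a b c d = (INF p \<in> Nehari k a b c d. ereal (Ifun k a b c d (fst p) (snd p)))"

end

theory Submission
  imports Defs "HOL-Computational_Algebra.Polynomial"
begin


fun Cn :: "nat \<Rightarrow> (real \<Rightarrow> real) \<Rightarrow> bool" where
  "Cn 0 h = True"
| "Cn (Suc n) h = (\<exists>h'. (\<forall>x. (h has_real_derivative h' x) (at x)) \<and> Cn n h')"

lemma Cn_mono: "Cn (Suc n) h \<Longrightarrow> Cn n h"
proof (induction n arbitrary: h)
  case 0 then show ?case by simp
next
  case (Suc n)
  then obtain h' where "\<forall>x. (h has_real_derivative h' x) (at x)" "Cn (Suc n) h'" by auto
  then show ?case using Suc.IH by auto
qed

lemma Cn_const: "Cn n (\<lambda>x. c)"
proof (induction n arbitrary: c)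
  case (Suc n) then show ?case by (auto intro!: exI[of _ "\<lambda>x. 0"] derivative_eq_intros)
qed simp

lemma Cn_add: "Cn n f \<Longrightarrow> Cn n g \<Longrightarrow> Cn n (\<lambda>x. f x + g x)"
proof (induction n arbitrary: f g)
  case (Suc n)
  then obtain f' g' where f': "\<forall>x. (f has_real_derivative f' x) (at x)" "Cn n f'"
    and g': "\<forall>x. (g has_real_derivative g' x) (at x)" "Cn n g'" by auto
  show ?case using f' g' Suc.IH[of f' g']
    by (auto intro!: exI[of _ "\<lambda>x. f' x + g' x"] derivative_eq_intros)
qed simp

lemma Cn_mult: "Cn n f \<Longrightarrow> Cn n g \<Longrightarrow> Cn n (\<lambda>x. f x * g x)"
proof (induction n arbitrary: f g)
  case (Suc n)
  then obtain f' g' where f': "\<forall>x. (f has_real_derivative f' x) (at x)" "Cn n f'"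
    and g': "\<forall>x. (g has_real_derivative g' x) (at x)" "Cn n g'" by auto
  have "Cn n f" "Cn n g" using Suc.prems Cn_mono by auto
  then have "Cn n (\<lambda>x. f' x * g x + f x * g' x)"
    using Suc.IH f' g' Cn_add by auto
  then show ?case using f' g'
    by (auto intro!: exI[of _ "\<lambda>x. f' x * g x + f x * g' x"] derivative_eq_intros)
qed simp

lemma Cn_affine: "Cn n h \<Longrightarrow> Cn n (\<lambda>x. h (c * x + e))"
proof (induction n arbitrary: h)
  case (Suc n)
  then obtain h' where h': "\<forall>x. (h has_real_derivative h' x) (at x)" "Cn n h'" by auto
  have "Cn n (\<lambda>x. c * h' (c * x + e))"
    using Cn_mult[OF Cn_const Suc.IH[OF h'(2)]] by simp
  moreover have "((\<lambda>x. h (c * x + e)) has_real_derivative c * h' (c * x + e)) (at x)" for x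
  proof -
    have "((\<lambda>x. c * x + e) has_real_derivative c) (at x)"
      by (auto intro!: derivative_eq_intros)
    from DERIV_chain2[where f=h and g="\<lambda>x. c * x + e", OF h'(1)[rule_format] this]
    show ?thesis by (simp add: mult.commute)
  qed
  ultimately show ?case by (auto intro!: exI[of _ "\<lambda>x. c * h' (c * x + e)"])
qed simp

lemma Cn_inverse: "Cn n h \<Longrightarrow> (\<forall>x. h x \<noteq> 0) \<Longrightarrow> Cn n (\<lambda>x. 1 / h x)"
proof (induction n arbitrary: h)
  case (Suc n)
  then obtain h' where h': "\<forall>x. (h has_real_derivative h' x) (at x)" "Cn n h'" by auto
  have inv: "Cn n (\<lambda>x. 1 / h x)" using Suc.IH[of h] Suc.prems Cn_mono by auto
  then have "Cn n (\<lambda>x. - h' x * ((1 / h x) * (1 / h x)))"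
  proof -
    have "Cn n (\<lambda>x. (1 / h x) * (1 / h x))" using Cn_mult[OF inv inv] .
    moreover have "Cn n (\<lambda>x. (-1) * h' x)" using Cn_mult[OF Cn_const h'(2)] .
    ultimately show ?thesis using Cn_mult by fastforce
  qed
  moreover have "((\<lambda>x. 1 / h x) has_real_derivative - h' x * ((1 / h x) * (1 / h x))) (at x)" for x
    using h'(1) Suc.prems(2)
  proof -
    have "h x \<noteq> 0" using Suc.prems(2) by auto
    then show ?thesis using h'(1)
      by (auto intro!: derivative_eq_intros simp: divide_simps power2_eq_square)
  qed
  ultimately show ?case by (auto intro!: exI[of _ "\<lambda>x. - h' x * ((1 / h x) * (1 / h x))"])
qed simp

lemma Cn_deriv: "Cn (Suc n) h \<Longrightarrow> (deriv ^^ n) h differentiable (at x)"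
proof (induction n arbitrary: h)
  case 0 then show ?case by (auto simp: real_differentiable_def)
next
  case (Suc n)
  then obtain h' where h': "\<forall>x. (h has_real_derivative h' x) (at x)" "Cn (Suc n) h'" by auto
  have "deriv h = h'" using h'(1) DERIV_imp_deriv by blast
  then have "(deriv ^^ Suc n) h = (deriv ^^ n) h'" by (simp add: funpow_Suc_right del: funpow.simps)
  then show ?case using Suc.IH[OF h'(2)] by simp
qed



definition fP :: "real poly \<Rightarrow> real \<Rightarrow> real" where
  "fP P x = (if x > 0 then poly P (1/x) * exp (-1/x) else 0)"

definition QP :: "real poly \<Rightarrow> real poly" where
  "QP P = [:0,0,1:] * (P - pderiv P)"

lemma lim_poly_exp: fixes P :: "real poly" shows "((\<lambda>y. poly P y * exp (-y)) \<longlongrightarrow> 0) at_top"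
proof -
  have eq: "poly P y * exp (-y) = (\<Sum>i\<le>degree P. coeff P i * (y ^ i / exp y))" for y
    by (simp add: poly_altdef exp_minus divide_inverse sum_distrib_right mult.assoc)
  have "((\<lambda>y. \<Sum>i\<le>degree P. coeff P i * (y ^ i / exp y)) \<longlongrightarrow> 0) at_top"
    by (intro tendsto_null_sum tendsto_mult_right_zero tendsto_power_div_exp_0)
  then show ?thesis by (simp add: eq)
qed

lemma lim_at_right: fixes P :: "real poly" shows "((\<lambda>x. poly P (1/x) * exp (-1/x)) \<longlongrightarrow> 0) (at_right 0)"
proof -
  have "(\<lambda>x. poly P (1 / inverse x) * exp (-1 / inverse x)) = (\<lambda>y. poly P y * exp (-y))"
    by (simp add: divide_inverse)
  then show ?thesis unfolding filterlim_at_right_to_top using lim_poly_exp[of P] by simp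
qed

lemma fP_deriv: "(fP P has_real_derivative fP (QP P) x) (at x)"
proof (cases "x > 0")
  case True
  have d1: "((\<lambda>y. poly P (1/y)) has_real_derivative poly (pderiv P) (1/x) * (- 1 / x^2)) (at x)"
  proof -
    have "((\<lambda>y. 1/y) has_real_derivative (- 1 / x^2)) (at x)"
      using True by (auto intro!: derivative_eq_intros simp: power2_eq_square)
    from DERIV_chain2[where f="poly P" and g="\<lambda>y. 1/y", OF poly_DERIV this] show ?thesis .
  qed
  have d2: "((\<lambda>y. exp (-1/y)) has_real_derivative exp (-1/x) * (1 / x^2)) (at x)"
    using True by (auto intro!: derivative_eq_intros simp: power2_eq_square)
  have d: "((\<lambda>y. poly P (1/y) * exp (-1/y)) has_real_derivative fP (QP P) x) (at x)"
    using DERIV_mult[OF d1 d2] True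
    by (simp add: fP_def QP_def poly_mult algebra_simps power2_eq_square divide_simps)
  show ?thesis
    by (rule has_field_derivative_transform_within_open[OF d, of "{0<..}"]) (use True in \<open>auto simp: fP_def\<close>)
next
  case False
  show ?thesis
  proof (cases "x < 0")
    case True
    have d: "((\<lambda>y. 0) has_real_derivative fP (QP P) x) (at x)"
      using True by (simp add: fP_def)
    show ?thesis
      by (rule has_field_derivative_transform_within_open[OF d, of "{..<0}"]) (use True in \<open>auto simp: fP_def\<close>)
  next
    case False
    with \<open>\<not> x > 0\<close> have x0: "x = 0" by simp
    have "((\<lambda>y. (fP P y - fP P 0) / (y - 0)) \<longlongrightarrow> 0) (at 0)"
    proof (rule filterlim_split_at)
      show "((\<lambda>y. (fP P y - fP P 0) / (y - 0)) \<longlongrightarrow> 0) (at_left 0)"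
      proof (rule Lim_transform_eventually)
        show "((\<lambda>y. 0::real) \<longlongrightarrow> 0) (at_left 0)" by simp
        show "\<forall>\<^sub>F y in at_left 0. 0 = (fP P y - fP P 0) / (y - 0)"
        proof -
          have "eventually (\<lambda>y. y \<in> {-1<..<0}) (at_left (0::real))"
            by (rule eventually_at_left_real) simp
          then show ?thesis by (rule eventually_mono) (auto simp: fP_def)
        qed
      qed
      show "((\<lambda>y. (fP P y - fP P 0) / (y - 0)) \<longlongrightarrow> 0) (at_right 0)"
      proof (rule Lim_transform_eventually)
        show "((\<lambda>y. poly (pCons 0 P) (1/y) * exp (-1/y)) \<longlongrightarrow> 0) (at_right 0)"
          by (rule lim_at_right)
        show "\<forall>\<^sub>F y in at_right 0. poly (pCons 0 P) (1/y) * exp (-1/y) = (fP P y - fP P 0) / (y - 0)"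
        proof -
          have "eventually (\<lambda>y. y \<in> {0<..<1}) (at_right (0::real))"
            by (rule eventually_at_right_real) simp
          then show ?thesis by (rule eventually_mono) (auto simp: fP_def)
        qed
      qed
    qed
    moreover have "fP (QP P) 0 = 0" by (simp add: fP_def)
    ultimately show ?thesis unfolding x0 has_field_derivative_iff by simp
  qed
qed

lemma Cn_fP: "Cn n (fP P)"
proof (induction n arbitrary: P)
  case (Suc n)
  then show ?case using fP_deriv by auto
qed simp

definition fE :: "real \<Rightarrow> real" where "fE = fP 1"

lemma fE_pos: "x > 0 \<Longrightarrow> fE x > 0" and fE_zero: "x \<le> 0 \<Longrightarrow> fE x = 0"
  and fE_nonneg: "fE x \<ge> 0"
  by (auto simp: fE_def fP_def)

definition sig :: "real \<Rightarrow> real" where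
  "sig x = fE x * (1 / (fE x + fE (1 - x)))"

lemma sig_den_pos: "fE x + fE (1 - x) > 0"
proof (cases "x > 0")
  case True then show ?thesis using fE_pos[of x] fE_nonneg[of "1-x"] by simp
next
  case False then show ?thesis using fE_pos[of "1-x"] fE_nonneg[of x] by simp
qed

lemma Cn_sig: "Cn n sig"
proof -
  have a: "Cn n fE" by (simp add: fE_def Cn_fP)
  have b: "Cn n (\<lambda>x. fE ((-1) * x + 1))" using Cn_affine[OF a] .
  have c: "Cn n (\<lambda>x. fE x + fE (1 - x))" using Cn_add[OF a b] by simp
  have d: "Cn n (\<lambda>x. 1 / (fE x + fE (1 - x)))"
    using Cn_inverse[OF c] sig_den_pos by (metis less_irrefl)
  show ?thesis unfolding sig_def[abs_def] using Cn_mult[OF a d] .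
qed

lemma sig_zero: "x \<le> 0 \<Longrightarrow> sig x = 0"
  by (simp add: sig_def fE_zero)

lemma sig_one: "x \<ge> 1 \<Longrightarrow> sig x = 1"
  using sig_den_pos[of x] by (simp add: sig_def fE_zero)

lemma sig_bounds: "0 \<le> sig x" "sig x \<le> 1"
  using sig_den_pos[of x] fE_nonneg[of x] fE_nonneg[of "1-x"]
  by (auto simp: sig_def divide_simps)

definition chi :: "real \<Rightarrow> real \<Rightarrow> real \<Rightarrow> real \<Rightarrow> real" where
  "chi a b n x = sig (n * x + (- n * a)) * sig ((- n) * x + n * b)"

lemma chi_bounds: "0 \<le> chi a b n x" "chi a b n x \<le> 1"
  using sig_bounds by (auto simp: chi_def intro: mult_le_one)

lemma chi_out: "n > 0 \<Longrightarrow> x \<notin> {a<..<b} \<Longrightarrow> chi a b n x = 0"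
proof -
  assume n: "n > 0" and x: "x \<notin> {a<..<b}"
  then consider "x \<le> a" | "x \<ge> b" by force
  then show ?thesis
  proof cases
    case 1
    have "n * x \<le> n * a" using 1 n by (simp add: mult_left_mono)
    then have "n * x + (- n * a) \<le> 0" by simp
    then show ?thesis by (simp add: chi_def sig_zero)
  next
    case 2
    have "n * b \<le> n * x" using 2 n by (simp add: mult_left_mono)
    then have "(- n) * x + n * b \<le> 0" by simp
    then show ?thesis by (simp add: chi_def sig_zero)
  qed
qed

lemma chi_test: "n > 0 \<Longrightarrow> test_fun (chi a b n)"
proof -
  assume n: "n > 0"
  have "Cn m (chi a b n)" for m
    unfolding chi_def[abs_def] by (intro Cn_mult Cn_affine Cn_sig)
  then have "(deriv ^^ m) (chi a b n) differentiable (at x)" for m x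
    using Cn_deriv by blast
  moreover have "{x. chi a b n x \<noteq> 0} \<subseteq> {a<..<b}" using chi_out[OF n] by blast
  then have "bounded {x. chi a b n x \<noteq> 0}" by (rule bounded_subset[rotated]) simp
  ultimately show ?thesis unfolding test_fun_def by simp
qed

lemma chi_lim: "(\<lambda>i. chi a b (real (Suc i)) x) \<longlonglongrightarrow> indicator {a<..<b} x"
proof (cases "x \<in> {a<..<b}")
  case True
  then have xa: "x - a > 0" and bx: "b - x > 0" by auto
  obtain N1 :: nat where N1: "1 / (x - a) < N1" using reals_Archimedean2 by blast
  obtain N2 :: nat where N2: "1 / (b - x) < N2" using reals_Archimedean2 by blast
  have "eventually (\<lambda>i. chi a b (real (Suc i)) x = 1) sequentially"
    unfolding eventually_sequentially
  proof (intro exI[of _ "N1 + N2"] allI impI)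
    fix i assume i: "N1 + N2 \<le> i"
    have "1 / (x - a) < real (Suc i)" using N1 i by linarith
    then have s1: "1 \<le> real (Suc i) * x + (- real (Suc i) * a)"
      using xa by (simp add: divide_simps algebra_simps)
    have "1 / (b - x) < real (Suc i)" using N2 i by linarith
    then have s2: "1 \<le> (- real (Suc i)) * x + real (Suc i) * b"
      using bx by (simp add: divide_simps algebra_simps)
    show "chi a b (real (Suc i)) x = 1" using s1 s2 by (simp add: chi_def sig_one)
  qed
  then have "(\<lambda>i. chi a b (real (Suc i)) x) \<longlonglongrightarrow> 1"
    by (rule tendsto_eventually)
  then show ?thesis using True by simp
next
  case False
  then show ?thesis using chi_out[of "real (Suc _)" x a b] by simp
qed



lemma L2_meas: "L2 g \<Longrightarrow> g \<in> borel_measurable lborel"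
  by (simp add: L2_def)

lemma L2_int_Icc: assumes "L2 g"
  shows "integrable lborel (\<lambda>x. \<bar>g x\<bar> * indicator {a..b} x)"
proof (rule Bochner_Integration.integrable_bound)
  have [measurable]: "g \<in> borel_measurable lborel" using assms by (simp add: L2_def)
  show "integrable lborel (\<lambda>x. (g x)^2 + indicator {a..b} x)"
  proof (rule Bochner_Integration.integrable_add)
    show "integrable lborel (\<lambda>x. (g x)^2)" using assms by (simp add: L2_def)
    show "integrable lborel (\<lambda>x. indicator {a..b} x :: real)"
      by (rule integrable_real_indicator) (auto simp: emeasure_lborel_Icc_eq)
  qed
  show "(\<lambda>x. \<bar>g x\<bar> * indicator {a..b} x) \<in> borel_measurable lborel" by measurable
  show "AE x in lborel. norm (\<bar>g x\<bar> * indicator {a..b} x) \<le> norm ((g x)^2 + indicator {a..b} x)"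
  proof (intro AE_I2)
    fix x
    have "\<bar>g x\<bar> \<le> (g x)^2 + 1"
    proof (cases "\<bar>g x\<bar> \<le> 1")
      case True then show ?thesis by (smt (verit) zero_le_power2)
    next
      case False
      then have "\<bar>g x\<bar> * 1 \<le> \<bar>g x\<bar> * \<bar>g x\<bar>" by (intro mult_left_mono) auto
      then show ?thesis by (simp add: power2_eq_square)
    qed
    then show "norm (\<bar>g x\<bar> * indicator {a..b} x) \<le> norm ((g x)^2 + indicator {a..b} x)"
      by (auto split: split_indicator)
  qed
qed

lemma L2_int_Ioo: assumes "L2 g"
  shows "integrable lborel (\<lambda>x. g x * indicator {a<..<b} x)"
proof (rule Bochner_Integration.integrable_bound[OF L2_int_Icc[OF assms, of a b]])
  have [measurable]: "g \<in> borel_measurable lborel" using assms by (simp add: L2_def)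
  show "(\<lambda>x. g x * indicator {a<..<b} x) \<in> borel_measurable lborel" by measurable
  show "AE x in lborel. norm (g x * indicator {a<..<b} x) \<le> norm (\<bar>g x\<bar> * indicator {a..b} x)"
    by (intro AE_I2) (auto split: split_indicator)
qed

lemma fund_step_A:
  assumes L: "L2 g"
    and T: "\<And>\<phi>. test_fun \<phi> \<Longrightarrow> integrable lborel (\<lambda>x. g x * \<phi> x) \<and> (\<integral>x. g x * \<phi> x \<partial>lborel) = 0"
  shows "(\<integral>x. g x * indicator {a<..<b} x \<partial>lborel) = 0"
proof (cases "a < b")
  case False
  then have "{a<..<b} = {}" by auto
  then show ?thesis by simp
next
  case True
  have [measurable]: "g \<in> borel_measurable lborel" using L by (simp add: L2_def)
  let ?s = "\<lambda>i x. g x * chi a b (real (Suc i)) x"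
  have tf: "test_fun (chi a b (real (Suc i)))" for i by (rule chi_test) simp
  have lim: "(\<lambda>i. integral\<^sup>L lborel (?s i)) \<longlonglongrightarrow> (\<integral>x. g x * indicator {a<..<b} x \<partial>lborel)"
  proof (rule integral_dominated_convergence[where w="\<lambda>x. \<bar>g x\<bar> * indicator {a..b} x"])
    show "(\<lambda>x. g x * indicator {a<..<b} x) \<in> borel_measurable lborel" by measurable
    show "?s i \<in> borel_measurable lborel" for i
      using T[OF tf[of i]] by (intro borel_measurable_integrable) simp
    show "integrable lborel (\<lambda>x. \<bar>g x\<bar> * indicator {a..b} x)" by (rule L2_int_Icc[OF L])
    show "AE x in lborel. (\<lambda>i. ?s i x) \<longlonglongrightarrow> g x * indicator {a<..<b} x"
      by (intro AE_I2 tendsto_mult_left chi_lim)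
    show "AE x in lborel. norm (?s i x) \<le> \<bar>g x\<bar> * indicator {a..b} x" for i
    proof (intro AE_I2)
      fix x
      show "norm (?s i x) \<le> \<bar>g x\<bar> * indicator {a..b} x"
      proof (cases "x \<in> {a<..<b}")
        case True
        then have "x \<in> {a..b}" by auto
        then show ?thesis using chi_bounds[of a b "real (Suc i)" x]
          by (auto simp: abs_mult intro: mult_left_le)
      next
        case False
        then show ?thesis using chi_out[of "real (Suc i)" x a b] by simp
      qed
    qed
  qed
  have "integral\<^sup>L lborel (?s i) = 0" for i using T[OF tf[of i]] by simp
  with lim have "(\<lambda>i. 0::real) \<longlonglongrightarrow> (\<integral>x. g x * indicator {a<..<b} x \<partial>lborel)" by simp
  then show ?thesis using LIMSEQ_unique tendsto_const by blast
qed

lemma fund_step_B: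
  assumes L: "L2 g"
    and A: "\<And>a b. (\<integral>x. g x * indicator {a<..<b} x \<partial>lborel) = 0"
  shows "AE x in lborel. x \<in> {-N<..<N} \<longrightarrow> g x = 0"
proof -
  have [measurable]: "g \<in> borel_measurable lborel" using L by (simp add: L2_def)
  define h where "h x = g x * indicator {-N<..<N} x" for x
  have hi: "integrable lborel h" unfolding h_def by (rule L2_int_Ioo[OF L])
  have [measurable]: "h \<in> borel_measurable lborel" using hi by (rule borel_measurable_integrable)
  have hp: "integrable lborel (\<lambda>x. max 0 (h x))" "integrable lborel (\<lambda>x. max 0 (- h x))"
    using hi by auto
  have ip: "integrable lborel (\<lambda>x. max 0 (h x) * indicator {t<..} x)"
    "integrable lborel (\<lambda>x. max 0 (- h x) * indicator {t<..} x)" for t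
    using hp by (auto intro!: integrable_real_mult_indicator)
  have hz: "(\<integral>x. h x * indicator {t<..} x \<partial>lborel) = 0" for t
  proof -
    have "h x * indicator {t<..} x = g x * indicator {max t (-N)<..<N} x" for x
      by (auto simp: h_def split: split_indicator)
    then show ?thesis using A by simp
  qed
  have eqi: "(\<integral>x. max 0 (h x) * indicator {t<..} x \<partial>lborel) = (\<integral>x. max 0 (- h x) * indicator {t<..} x \<partial>lborel)" for t
  proof -
    have "(\<integral>x. max 0 (h x) * indicator {t<..} x \<partial>lborel) - (\<integral>x. max 0 (- h x) * indicator {t<..} x \<partial>lborel)
      = (\<integral>x. max 0 (h x) * indicator {t<..} x - max 0 (- h x) * indicator {t<..} x \<partial>lborel)"
      using ip by (simp add: Bochner_Integration.integral_diff)
    also have "\<dots> = (\<integral>x. h x * indicator {t<..} x \<partial>lborel)"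
      by (intro Bochner_Integration.integral_cong) (auto split: split_indicator)
    finally show ?thesis using hz by simp
  qed
  let ?f1 = "\<lambda>x. ennreal (max 0 (h x))" and ?f2 = "\<lambda>x. ennreal (max 0 (- h x))"
  have nn1: "(\<integral>\<^sup>+x. ?f1 x * indicator {t<..} x \<partial>lborel) = ennreal (\<integral>x. max 0 (h x) * indicator {t<..} x \<partial>lborel)" for t
    using nn_integral_eq_integral[OF ip(1)[of t]]
    by (auto simp: ennreal_mult' ennreal_indicator intro!: nn_integral_cong split: split_indicator)
  have nn2: "(\<integral>\<^sup>+x. ?f2 x * indicator {t<..} x \<partial>lborel) = ennreal (\<integral>x. max 0 (- h x) * indicator {t<..} x \<partial>lborel)" for t
    using nn_integral_eq_integral[OF ip(2)[of t]]
    by (auto simp: ennreal_mult' ennreal_indicator intro!: nn_integral_cong split: split_indicator)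
  have "density lborel ?f1 = density lborel ?f2"
  proof (rule measure_eqI_lessThan)
    show "sets (density lborel ?f1) = sets borel" "sets (density lborel ?f2) = sets borel" by auto
    show "emeasure (density lborel ?f1) {t<..} < \<infinity>" for t
      using nn1[of t] by (simp add: emeasure_density)
    show "emeasure (density lborel ?f1) {t<..} = emeasure (density lborel ?f2) {t<..}" for t
      using nn1[of t] nn2[of t] eqi[of t] by (simp add: emeasure_density)
  qed
  moreover have "integral\<^sup>N lborel ?f1 \<noteq> \<infinity>"
    using nn_integral_eq_integral[OF hp(1)] by simp
  ultimately have "AE x in lborel. ?f1 x = ?f2 x"
    by (subst (asm) finite_density_unique) auto
  then show ?thesis
  proof (rule eventually_mono)
    fix x assume "?f1 x = ?f2 x"
    then have "max 0 (h x) = max 0 (- h x)" by (simp add: ennreal_inj)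
    then show "x \<in> {-N<..<N} \<longrightarrow> g x = 0" by (auto simp: h_def split: if_splits)
  qed
qed

lemma fund_lemma:
  assumes L: "L2 g"
    and T: "\<And>\<phi>. test_fun \<phi> \<Longrightarrow> integrable lborel (\<lambda>x. g x * \<phi> x) \<and> (\<integral>x. g x * \<phi> x \<partial>lborel) = 0"
  shows "AE x in lborel. g x = 0"
proof -
  have "AE x in lborel. x \<in> {- real N<..<real N} \<longrightarrow> g x = 0" for N :: nat
    by (rule fund_step_B[OF L fund_step_A[OF L T]])
  then have "AE x in lborel. \<forall>N::nat. x \<in> {- real N<..<real N} \<longrightarrow> g x = 0"
    by (subst AE_all_countable) auto
  then show ?thesis
  proof (rule eventually_mono)
    fix x assume H: "\<forall>N::nat. x \<in> {- real N<..<real N} \<longrightarrow> g x = 0"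
    obtain N :: nat where "\<bar>x\<bar> < N" using reals_Archimedean2 by blast
    then show "g x = 0" using H[rule_format, of N] by (auto simp: abs_less_iff)
  qed
qed

lemma weak_deriv_unique:
  assumes "L2 g1" "L2 g2" "is_weak_deriv u g1" "is_weak_deriv u g2"
  shows "AE x in lborel. g1 x = g2 x"
proof -
  have L: "L2 (\<lambda>x. g1 x - g2 x)"
  proof -
    have [measurable]: "g1 \<in> borel_measurable lborel" "g2 \<in> borel_measurable lborel"
      using assms by (auto simp: L2_def)
    have "integrable lborel (\<lambda>x. 2 * (g1 x)^2 + 2 * (g2 x)^2)"
      using assms by (auto simp: L2_def)
    then have "integrable lborel (\<lambda>x. (g1 x - g2 x)^2)"
    proof (rule Bochner_Integration.integrable_bound)
      show "(\<lambda>x. (g1 x - g2 x)^2) \<in> borel_measurable lborel" by measurable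
      show "AE x in lborel. norm ((g1 x - g2 x)^2) \<le> norm (2 * (g1 x)^2 + 2 * (g2 x)^2)"
      proof (intro AE_I2)
        fix x
        have "0 \<le> (g1 x + g2 x)^2" by simp
        then have "(g1 x - g2 x)^2 \<le> 2 * (g1 x)^2 + 2 * (g2 x)^2"
          by (simp add: power2_eq_square algebra_simps)
        moreover have "0 \<le> 2 * (g1 x)^2 + 2 * (g2 x)^2" by simp
        ultimately show "norm ((g1 x - g2 x)^2) \<le> norm (2 * (g1 x)^2 + 2 * (g2 x)^2)"
          by simp
      qed
    qed
    then show ?thesis by (simp add: L2_def)
  qed
  have "AE x in lborel. g1 x - g2 x = 0"
  proof (rule fund_lemma[OF L])
    fix \<phi> assume "test_fun \<phi>"
    then have h1: "integrable lborel (\<lambda>x. g1 x * \<phi> x)" "integrable lborel (\<lambda>x. g2 x * \<phi> x)"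
      and e: "(\<integral>x. u x * deriv \<phi> x \<partial>lborel) = - (\<integral>x. g1 x * \<phi> x \<partial>lborel)"
             "(\<integral>x. u x * deriv \<phi> x \<partial>lborel) = - (\<integral>x. g2 x * \<phi> x \<partial>lborel)"
      using assms(3,4) unfolding is_weak_deriv_def by auto
    have "(\<integral>x. (g1 x - g2 x) * \<phi> x \<partial>lborel) = (\<integral>x. g1 x * \<phi> x \<partial>lborel) - (\<integral>x. g2 x * \<phi> x \<partial>lborel)"
      using h1 by (simp add: left_diff_distrib Bochner_Integration.integral_diff)
    then show "integrable lborel (\<lambda>x. (g1 x - g2 x) * \<phi> x) \<and> (\<integral>x. (g1 x - g2 x) * \<phi> x \<partial>lborel) = 0"
      using h1 e by (simp add: left_diff_distrib)
  qed
  then show ?thesis by auto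
qed



lemma wd: "u \<in> H1 \<Longrightarrow> L2 (wderiv u) \<and> is_weak_deriv u (wderiv u)"
proof -
  assume "u \<in> H1"
  then have "\<exists>g. L2 g \<and> is_weak_deriv u g" by (simp add: H1_def)
  then show ?thesis unfolding wderiv_def by (rule someI_ex)
qed

lemma L2_scale: "L2 u \<Longrightarrow> L2 (\<lambda>x. t * u x)"
proof -
  assume L: "L2 u"
  then have [measurable]: "u \<in> borel_measurable lborel" by (simp add: L2_def)
  have "integrable lborel (\<lambda>x. t^2 * (u x)^2)" using L by (simp add: L2_def)
  then show ?thesis unfolding L2_def by (simp add: power_mult_distrib)
qed

lemma weak_scale: "is_weak_deriv u g \<Longrightarrow> is_weak_deriv (\<lambda>x. t * u x) (\<lambda>x. t * g x)"
  unfolding is_weak_deriv_def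
proof (intro allI impI)
  fix \<phi> :: "real \<Rightarrow> real"
  assume H: "\<forall>\<phi>. test_fun \<phi> \<longrightarrow> integrable lborel (\<lambda>x. u x * deriv \<phi> x) \<and>
      integrable lborel (\<lambda>x. g x * \<phi> x) \<and> (LBINT x. u x * deriv \<phi> x) = - (LBINT x. g x * \<phi> x)"
    and T: "test_fun \<phi>"
  from H T have i1: "integrable lborel (\<lambda>x. u x * deriv \<phi> x)"
    and i2: "integrable lborel (\<lambda>x. g x * \<phi> x)"
    and e: "(LBINT x. u x * deriv \<phi> x) = - (LBINT x. g x * \<phi> x)" by auto
  have a: "(\<lambda>x. t * u x * deriv \<phi> x) = (\<lambda>x. t * (u x * deriv \<phi> x))" by (simp add: mult.assoc)
  have b: "(\<lambda>x. t * g x * \<phi> x) = (\<lambda>x. t * (g x * \<phi> x))" by (simp add: mult.assoc)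
  show "integrable lborel (\<lambda>x. t * u x * deriv \<phi> x) \<and>
        integrable lborel (\<lambda>x. t * g x * \<phi> x) \<and>
        (LBINT x. t * u x * deriv \<phi> x) = - (LBINT x. t * g x * \<phi> x)"
    unfolding a b using i1 i2 e by simp
qed

lemma H1_scale:
  assumes "u \<in> H1"
  shows "(\<lambda>x. t * u x) \<in> H1" "AE x in lborel. wderiv (\<lambda>x. t * u x) x = t * wderiv u x"
proof -
  from wd[OF assms] have L: "L2 (wderiv u)" and W: "is_weak_deriv u (wderiv u)" by auto
  have Lu: "L2 u" using assms by (simp add: H1_def)
  show H: "(\<lambda>x. t * u x) \<in> H1"
    unfolding H1_def using L2_scale[OF Lu] L2_scale[OF L] weak_scale[OF W] by blast
  from wd[OF H] have "L2 (wderiv (\<lambda>x. t * u x))" "is_weak_deriv (\<lambda>x. t * u x) (wderiv (\<lambda>x. t * u x))"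
    by auto
  from weak_deriv_unique[OF this(1) L2_scale[OF L] this(2) weak_scale[OF W]]
  show "AE x in lborel. wderiv (\<lambda>x. t * u x) x = t * wderiv u x" .
qed

lemma Sfun_integrable:
  assumes "u \<in> H1" "v \<in> H1"
  shows "integrable lborel (\<lambda>x. (wderiv u x)^2 + (wderiv v x)^2 + (u x)^2 + (v x)^2)"
  using wd[OF assms(1)] wd[OF assms(2)] assms by (auto simp: L2_def H1_def)

lemma Sfun_scale:
  assumes "u \<in> H1" "v \<in> H1"
  shows "Sfun (\<lambda>x. t * u x) (\<lambda>x. t * v x) = t^2 * Sfun u v"
proof -
  have [measurable]: "wderiv u \<in> borel_measurable lborel" "wderiv v \<in> borel_measurable lborel"
    "u \<in> borel_measurable lborel" "v \<in> borel_measurable lborel"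
    "wderiv (\<lambda>x. t * u x) \<in> borel_measurable lborel" "wderiv (\<lambda>x. t * v x) \<in> borel_measurable lborel"
    using wd[OF assms(1)] wd[OF assms(2)] wd[OF H1_scale(1)[OF assms(1)]] wd[OF H1_scale(1)[OF assms(2)]] assms
    by (auto simp: L2_def H1_def)
  have "Sfun (\<lambda>x. t * u x) (\<lambda>x. t * v x) =
     (\<integral>x. t^2 * ((wderiv u x)^2 + (wderiv v x)^2 + (u x)^2 + (v x)^2) \<partial>lborel)"
    unfolding Sfun_def
  proof (rule integral_cong_AE)
    show "AE x in lborel. (wderiv (\<lambda>x. t * u x) x)\<^sup>2 + (wderiv (\<lambda>x. t * v x) x)\<^sup>2 + (t * u x)\<^sup>2 + (t * v x)\<^sup>2 =
       t\<^sup>2 * ((wderiv u x)\<^sup>2 + (wderiv v x)\<^sup>2 + (u x)\<^sup>2 + (v x)\<^sup>2)"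
      using H1_scale(2)[OF assms(1), of t] H1_scale(2)[OF assms(2), of t]
      by eventually_elim (simp add: power_mult_distrib algebra_simps)
  qed measurable
  also have "\<dots> = t^2 * Sfun u v" unfolding Sfun_def by simp
  finally show ?thesis .
qed

lemma Sfun_nonneg: "Sfun u v \<ge> 0"
  unfolding Sfun_def by (rule integral_nonneg_AE) auto

lemma Sfun_pos:
  assumes "u \<in> H1" "v \<in> H1" "\<not> (AE x in lborel. u x = 0 \<and> v x = 0)"
  shows "Sfun u v > 0"
proof (rule ccontr)
  assume "\<not> Sfun u v > 0"
  then have "Sfun u v = 0" using Sfun_nonneg[of u v] by simp
  then have "AE x in lborel. (wderiv u x)^2 + (wderiv v x)^2 + (u x)^2 + (v x)^2 = 0"
    unfolding Sfun_def
    by (subst (asm) integral_nonneg_eq_0_iff_AE[OF Sfun_integrable[OF assms(1,2)]]) auto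
  then have "AE x in lborel. u x = 0 \<and> v x = 0"
    by eventually_elim (auto simp: add_nonneg_eq_0_iff)
  then show False using assms(3) by simp
qed

definition Jf :: "nat \<Rightarrow> real \<Rightarrow> real \<Rightarrow> real \<Rightarrow> real \<Rightarrow> (real \<Rightarrow> real) \<Rightarrow> (real \<Rightarrow> real) \<Rightarrow> real" where
  "Jf k a b c d u v = (\<integral>x. Hfun k a b c d (u x) (v x) \<partial>lborel)"

lemma Hfun_hom: "Hfun k a b c d (t * x) (t * y) = t^(2*k+2) * Hfun k a b c d x y"
proof -
  have e1: "t^(2*k+2) = t^(k+2) * t^k"
  proof -
    have "2*k+2 = (k+2)+k" by simp
    then show ?thesis by (simp only: power_add)
  qed
  have e3: "t^(2*k+2) = t^k * t^(k+2)" using e1 by (simp add: mult.commute)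
  have e2: "t^(2*k+2) = (t*t)^(k+1)"
  proof -
    have "2*k+2 = 2*(k+1)" by simp
    then show ?thesis by (simp only: power_mult power2_eq_square)
  qed
  have f1: "(t*x)^(2*k+2) = t^(2*k+2) * x^(2*k+2)" by (simp add: power_mult_distrib)
  have f2: "((t*x)*(t*y))^(k+1) = t^(2*k+2) * (x*y)^(k+1)"
    unfolding e2 by (simp add: power_mult_distrib[symmetric] mult_ac)
  have f3: "c / real k * (t*x)^(k+2) * (t*y)^k = t^(2*k+2) * (c / real k * x^(k+2) * y^k)"
    unfolding e1 by (simp add: power_mult_distrib mult_ac)
  have f4: "d / real k * (t*x)^k * (t*y)^(k+2) = t^(2*k+2) * (d / real k * x^k * y^(k+2))"
    unfolding e3 by (simp add: power_mult_distrib mult_ac)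
  have f5: "(t*y)^(2*k+2) = t^(2*k+2) * y^(2*k+2)" by (simp add: power_mult_distrib)
  show ?thesis unfolding Hfun_def f1 f2 f3 f4 f5 by (simp add: algebra_simps)
qed

lemma Jf_scale: "Jf k a b c d (\<lambda>x. t * u x) (\<lambda>x. t * v x) = t^(2*k+2) * Jf k a b c d u v"
  unfolding Jf_def Hfun_hom by simp

lemma Ifun_eq: "Ifun k a b c d u v = Sfun u v / 2 - Jf k a b c d u v"
  unfolding Ifun_def Jf_def ..

lemma Ptilde_eq: "Ptilde k a b c d u v = (2 * real k + 2) * Jf k a b c d u v"
  unfolding Ptilde_def Jf_def ..

lemma Nehari_iff:
  assumes "u \<in> H1" "v \<in> H1"
  shows "((\<lambda>t. Ifun k a b c d (\<lambda>x. u x + t * u x) (\<lambda>x. v x + t * v x)) has_real_derivative 0) (at 0)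
     \<longleftrightarrow> Sfun u v = (2 * real k + 2) * Jf k a b c d u v"
proof -
  have fe: "(\<lambda>t. Ifun k a b c d (\<lambda>x. u x + t * u x) (\<lambda>x. v x + t * v x)) =
     (\<lambda>t. (1 + t)^2 * Sfun u v / 2 - (1 + t)^(2*k+2) * Jf k a b c d u v)"
  proof
    fix t
    have "(\<lambda>x. u x + t * u x) = (\<lambda>x. (1 + t) * u x)" "(\<lambda>x. v x + t * v x) = (\<lambda>x. (1 + t) * v x)"
      by (auto simp: algebra_simps)
    then show "Ifun k a b c d (\<lambda>x. u x + t * u x) (\<lambda>x. v x + t * v x) =
      (1 + t)^2 * Sfun u v / 2 - (1 + t)^(2*k+2) * Jf k a b c d u v"
      unfolding Ifun_eq by (simp add: Sfun_scale[OF assms] Jf_scale)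
  qed
  have D: "((\<lambda>t. (1 + t)^2 * Sfun u v / 2 - (1 + t)^(2*k+2) * Jf k a b c d u v) has_real_derivative
      (Sfun u v - (2 * real k + 2) * Jf k a b c d u v)) (at 0)"
    by (auto intro!: derivative_eq_intros simp: algebra_simps)
  show ?thesis
  proof
    assume "((\<lambda>t. Ifun k a b c d (\<lambda>x. u x + t * u x) (\<lambda>x. v x + t * v x)) has_real_derivative 0) (at 0)"
    then have "Sfun u v - (2 * real k + 2) * Jf k a b c d u v = 0"
      using D unfolding fe using DERIV_unique by blast
    then show "Sfun u v = (2 * real k + 2) * Jf k a b c d u v" by simp
  next
    assume "Sfun u v = (2 * real k + 2) * Jf k a b c d u v"
    then show "((\<lambda>t. Ifun k a b c d (\<lambda>x. u x + t * u x) (\<lambda>x. v x + t * v x)) has_real_derivative 0) (at 0)"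
      using D unfolding fe by simp
  qed
qed



lemma ereal_cmult_INF:
  assumes "c > 0"
  shows "ereal c * (INF i\<in>A. f i) = (INF i\<in>A. ereal c * f i)"
proof -
  have "bij ((*) (ereal c))"
    apply (rule bij_betw_byWitness[of _ "\<lambda>x. (x::ereal) / c"], auto simp: assms ereal_mult_divide)
    using assms ereal_divide_eq by auto
  moreover have "mono ((*) (ereal c))"
    by (simp add: assms ereal_mult_left_mono less_imp_le mono_def)
  ultimately have "ereal c * Inf (f ` A) = Inf ((*) (ereal c) ` (f ` A))"
    using mono_bij_Inf by blast
  then show ?thesis by (simp add: image_comp comp_def)
qed

lemma powr_INF:
  assumes V: "V \<subseteq> {0..}" and q: "q > 0"
  shows "ereal_powr (INF x\<in>V. ereal x) q = (INF x\<in>V. ereal (x powr q))"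
proof (cases "V = {}")
  case True
  then show ?thesis by (simp add: ereal_powr_def top_ereal_def)
next
  case False
  have bV: "bdd_below V" using V by (auto intro: bdd_belowI[of _ 0])
  define m where "m = Inf V"
  have m0: "0 \<le> m" unfolding m_def using V False by (auto intro: cInf_greatest)
  have mle: "m \<le> x" if "x \<in> V" for x unfolding m_def using bV that by (rule cInf_lower[rotated])
  have e1: "(INF x\<in>V. ereal x) = ereal m" unfolding m_def using ereal_Inf'[OF bV False] by simp
  define W where "W = (\<lambda>x. x powr q) ` V"
  have bW: "bdd_below W" unfolding W_def by (auto intro: bdd_belowI[of _ 0])
  have WnE: "W \<noteq> {}" using False unfolding W_def by simp
  have e2: "(INF x\<in>V. ereal (x powr q)) = ereal (Inf W)"
    using ereal_Inf'[OF bW WnE] unfolding W_def by (simp add: image_comp)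
  have "Inf W = m powr q"
  proof (rule antisym)
    show "m powr q \<le> Inf W"
      using WnE by (rule cInf_greatest) (auto simp: W_def intro!: powr_mono2 mle m0 less_imp_le[OF q])
    show "Inf W \<le> m powr q"
    proof (rule ccontr)
      assume "\<not> Inf W \<le> m powr q"
      then have lt: "m powr q < Inf W" by simp
      define L where "L = Inf W"
      have L0: "L > 0" using lt L_def by (smt (verit) powr_ge_zero)
      have "(m powr q) powr (1/q) < L powr (1/q)"
        using lt q unfolding L_def[symmetric] by (intro powr_less_mono2) auto
      then have "m < L powr (1/q)" using q m0 by (simp add: powr_powr)
      then obtain x where x: "x \<in> V" "x < L powr (1/q)"
        using cInf_less_iff[OF False bV] unfolding m_def by blast
      then have "x powr q < (L powr (1/q)) powr q"
        using V q by (intro powr_less_mono2) auto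
      also have "\<dots> = L" using q L0 by (simp add: powr_powr)
      finally have "x powr q < L" .
      moreover have "L \<le> x powr q" unfolding L_def W_def using bW x(1) W_def
        by (intro cInf_lower) auto
      ultimately show False by simp
    qed
  qed
  then show ?thesis using e1 e2 by (simp add: ereal_powr_def)
qed

lemma Nehari_mem:
  "(u, v) \<in> Nehari k a b c d \<longleftrightarrow> u \<in> H1 \<and> v \<in> H1 \<and> \<not> (AE x in lborel. u x = 0 \<and> v x = 0)
     \<and> Sfun u v = (2 * real k + 2) * Jf k a b c d u v"
  unfolding Nehari_def using Nehari_iff by auto

lemma arith1:
  fixes K X :: real assumes "K \<ge> 1"
  shows "(2 * K + 2) / K * (X / 2 - X / (2 * K + 2)) = X"
proof -
  have n1: "2 * K + 2 \<noteq> 0" "K \<noteq> 0" using assms by auto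
  have "X / 2 - X / (2 * K + 2) = X * K / (2 * K + 2)" using n1 by (simp add: field_simps)
  then show ?thesis using n1 by simp
qed

lemma dir1:
  assumes k: "k \<ge> 1" and N: "(u, v) \<in> Nehari k a b c d"
  shows "\<exists>w \<in> {(u, v). u \<in> H1 \<and> v \<in> H1 \<and> Ptilde k a b c d u v = 1}.
     (2 * real k + 2) / real k * Ifun k a b c d u v = Sfun (fst w) (snd w) powr ((real k + 1) / real k)"
proof -
  from N have H: "u \<in> H1" "v \<in> H1" and nz: "\<not> (AE x in lborel. u x = 0 \<and> v x = 0)"
    and eq: "Sfun u v = (2 * real k + 2) * Jf k a b c d u v"
    by (auto simp: Nehari_mem)
  define m where "m = Sfun u v"
  have m0: "m > 0" unfolding m_def by (rule Sfun_pos[OF H nz])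
  have K: "real k \<ge> 1" using k by simp
  define s where "s = m powr (-1 / (2 * real k + 2))"
  have s2k: "s ^ (2*k+2) = 1 / m"
  proof -
    have "s ^ (2*k+2) = m powr (real (2*k+2) * (-1 / (2 * real k + 2)))"
      unfolding s_def by (rule powr_power) (use m0 in simp)
    also have "real (2*k+2) * (-1 / (2 * real k + 2)) = -1" using K by (simp add: field_simps)
    finally show ?thesis using m0 by (simp add: powr_minus divide_inverse)
  qed
  have s2: "s^2 * m = m powr (real k / (real k + 1))"
  proof -
    have "s^2 = m powr (real 2 * (-1 / (2 * real k + 2)))"
      unfolding s_def by (rule powr_power) (use m0 in simp)
    then have "s^2 * m = m powr (real 2 * (-1 / (2 * real k + 2))) * m powr 1"
      using m0 by (simp add: powr_one)
    also have "\<dots> = m powr (real 2 * (-1 / (2 * real k + 2)) + 1)" by (rule powr_add[symmetric])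
    also have "real 2 * (-1 / (2 * real k + 2)) + 1 = real k / (real k + 1)" using K by (simp add: field_simps)
    finally show ?thesis .
  qed
  define w where "w = ((\<lambda>x. s * u x), (\<lambda>x. s * v x))"
  have wH: "fst w \<in> H1" "snd w \<in> H1" unfolding w_def using H1_scale(1) H by auto
  have J: "Jf k a b c d u v = m / (2 * real k + 2)" using eq K unfolding m_def by (simp add: field_simps)
  have Pw: "Ptilde k a b c d (fst w) (snd w) = 1"
    unfolding Ptilde_eq w_def fst_conv snd_conv Jf_scale s2k J using K m0 by simp
  have Sw: "Sfun (fst w) (snd w) = m powr (real k / (real k + 1))"
    unfolding w_def using Sfun_scale[OF H, of s] s2 by (simp add: m_def mult.commute)
  have "Sfun (fst w) (snd w) powr ((real k + 1) / real k) = m"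
    unfolding Sw using m0 K by (simp add: powr_powr)
  moreover have "(2 * real k + 2) / real k * Ifun k a b c d u v = m"
    unfolding Ifun_eq J using arith1[OF K, of m] by (simp add: m_def)
  ultimately show ?thesis using wH Pw by (intro bexI[of _ w]) (auto simp: case_prod_beta)
qed

lemma Hfun_00: "k \<ge> 1 \<Longrightarrow> Hfun k a b c d 0 0 = 0"
  by (simp add: Hfun_def)

lemma dir2:
  assumes k: "k \<ge> 1" and H: "u \<in> H1" "v \<in> H1" and P: "Ptilde k a b c d u v = 1"
  shows "\<exists>p \<in> Nehari k a b c d.
     Sfun u v powr ((real k + 1) / real k) = (2 * real k + 2) / real k * Ifun k a b c d (fst p) (snd p)"
proof -
  have K: "real k \<ge> 1" using k by simp
  have J: "Jf k a b c d u v = 1 / (2 * real k + 2)" using P K unfolding Ptilde_eq by (simp add: field_simps)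
  have nz: "\<not> (AE x in lborel. u x = 0 \<and> v x = 0)"
  proof
    assume "AE x in lborel. u x = 0 \<and> v x = 0"
    then have "AE x in lborel. Hfun k a b c d (u x) (v x) = 0"
      by eventually_elim (simp add: Hfun_00[OF k])
    then have "Jf k a b c d u v = 0" unfolding Jf_def by (rule integral_eq_zero_AE)
    then show False using J K by simp
  qed
  define s where "s = Sfun u v"
  have s0: "s > 0" unfolding s_def by (rule Sfun_pos[OF H nz])
  define t where "t = s powr (1 / (2 * real k))"
  have t0: "t > 0" unfolding t_def using s0 by simp
  have t2s: "t^2 * s = s powr (1 / real k + 1)"
  proof -
    have "t^2 = s powr (real 2 * (1 / (2 * real k)))"
      unfolding t_def by (rule powr_power) (use s0 in simp)
    then have "t^2 * s = s powr (real 2 * (1 / (2 * real k))) * s powr 1"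
      using s0 by (simp add: powr_one)
    also have "\<dots> = s powr (real 2 * (1 / (2 * real k)) + 1)" by (rule powr_add[symmetric])
    also have "real 2 * (1 / (2 * real k)) + 1 = 1 / real k + 1" using K by (simp add: field_simps)
    finally show ?thesis .
  qed
  have t2k: "t^(2*k+2) = s powr (1 / real k + 1)"
  proof -
    have "t^(2*k+2) = s powr (real (2*k+2) * (1 / (2 * real k)))"
      unfolding t_def by (rule powr_power) (use s0 in simp)
    also have "real (2*k+2) * (1 / (2 * real k)) = 1 / real k + 1" using K by (simp add: field_simps)
    finally show ?thesis .
  qed
  define p where "p = ((\<lambda>x. t * u x), (\<lambda>x. t * v x))"
  have pH: "fst p \<in> H1" "snd p \<in> H1" unfolding p_def using H1_scale(1) H by auto
  have Sp: "Sfun (fst p) (snd p) = s powr (1 / real k + 1)"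
    unfolding p_def using Sfun_scale[OF H, of t] t2s by (simp add: s_def)
  have Jp: "Jf k a b c d (fst p) (snd p) = s powr (1 / real k + 1) / (2 * real k + 2)"
    unfolding p_def fst_conv snd_conv Jf_scale t2k J by simp
  have pnz: "\<not> (AE x in lborel. fst p x = 0 \<and> snd p x = 0)"
  proof
    assume "AE x in lborel. fst p x = 0 \<and> snd p x = 0"
    then have "AE x in lborel. u x = 0 \<and> v x = 0"
      by eventually_elim (use t0 in \<open>simp add: p_def\<close>)
    then show False using nz by simp
  qed
  have pN: "p \<in> Nehari k a b c d"
    using pH pnz Sp Jp K Nehari_mem[of "fst p" "snd p" k a b c d] by simp
  have q: "(real k + 1) / real k = 1 / real k + 1" using K by (simp add: field_simps)
  have "(2 * real k + 2) / real k * Ifun k a b c d (fst p) (snd p) = s powr (1 / real k + 1)"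
    unfolding Ifun_eq Sp Jp using arith1[OF K] by simp
  then show ?thesis using pN q by (intro bexI[of _ p]) (auto simp: s_def)
qed

theorem lemma5p1:
  fixes k :: nat and a b c d :: real
  assumes "k \<ge> 1" and "a \<ge> 0" and "b \<ge> 0" and "c \<ge> 0" and "d \<ge> 0"
  shows "lambda1 k a b c d = ereal ((2 * real k + 2) / real k) * omegaN k a b c d"
proof -
  have K: "real k \<ge> 1" using assms(1) by simp
  define A where "A = {(u, v). u \<in> H1 \<and> v \<in> H1 \<and> Ptilde k a b c d u v = 1}"
  define V where "V = (\<lambda>p. Sfun (fst p) (snd p)) ` A"
  define q where "q = (real k + 1) / real k"
  define c0 where "c0 = (2 * real k + 2) / real k"
  have q0: "q > 0" unfolding q_def using K by simp
  have c00: "c0 > 0" unfolding c0_def using K by simp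
  have S1: "S1 k a b c d = (INF x\<in>V. ereal x)"
    unfolding S1_def V_def A_def by (simp add: image_comp)
  have om: "ereal c0 * omegaN k a b c d = (INF p\<in>Nehari k a b c d. ereal (c0 * Ifun k a b c d (fst p) (snd p)))"
    unfolding omegaN_def by (subst ereal_cmult_INF[OF c00]) simp
  have seteq: "(\<lambda>p. c0 * Ifun k a b c d (fst p) (snd p)) ` Nehari k a b c d = (\<lambda>x. x powr q) ` V"
  proof
    show "(\<lambda>p. c0 * Ifun k a b c d (fst p) (snd p)) ` Nehari k a b c d \<subseteq> (\<lambda>x. x powr q) ` V"
    proof
      fix y assume "y \<in> (\<lambda>p. c0 * Ifun k a b c d (fst p) (snd p)) ` Nehari k a b c d"
      then obtain u v where N: "(u, v) \<in> Nehari k a b c d" and y: "y = c0 * Ifun k a b c d u v" by auto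
      from dir1[OF assms(1) N] obtain w where "w \<in> A"
        "c0 * Ifun k a b c d u v = Sfun (fst w) (snd w) powr q"
        unfolding A_def c0_def q_def by blast
      then show "y \<in> (\<lambda>x. x powr q) ` V" unfolding V_def y by auto
    qed
    show "(\<lambda>x. x powr q) ` V \<subseteq> (\<lambda>p. c0 * Ifun k a b c d (fst p) (snd p)) ` Nehari k a b c d"
    proof
      fix y assume "y \<in> (\<lambda>x. x powr q) ` V"
      then obtain u v where H: "u \<in> H1" "v \<in> H1" "Ptilde k a b c d u v = 1" and y: "y = Sfun u v powr q"
        unfolding V_def A_def by auto
      from dir2[OF assms(1) H] obtain p where "p \<in> Nehari k a b c d"
        "Sfun u v powr q = c0 * Ifun k a b c d (fst p) (snd p)"
        unfolding c0_def q_def by blast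
      then show "y \<in> (\<lambda>p. c0 * Ifun k a b c d (fst p) (snd p)) ` Nehari k a b c d" unfolding y by auto
    qed
  qed
  have "ereal c0 * omegaN k a b c d = (INF y\<in>(\<lambda>p. c0 * Ifun k a b c d (fst p) (snd p)) ` Nehari k a b c d. ereal y)"
    unfolding om by (simp add: image_comp)
  also have "\<dots> = (INF y\<in>(\<lambda>x. x powr q) ` V. ereal y)" unfolding seteq ..
  also have "\<dots> = (INF x\<in>V. ereal (x powr q))" by (simp add: image_comp)
  also have "\<dots> = ereal_powr (INF x\<in>V. ereal x) q"
    by (rule powr_INF[symmetric]) (use q0 Sfun_nonneg in \<open>auto simp: V_def\<close>)
  also have "\<dots> = lambda1 k a b c d" unfolding lambda1_def S1 q_def ..
  finally show ?thesis unfolding c0_def by simp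
qed


end
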